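(* Let $n\ge3$, $m\in\{2,3,\dots,n-1\}$ and $t\in(0,1]$. Then there exist a Hilbert space $\mathcal H$ and operators $T_1,\dots,T_n\in B(\mathcal H)$ with $\sum_{i=1}^nT_iT_i^*\le I$ and $\operatorname{rank}(I-\sum_iT_iT_i^* )<\infty$ such that, with $\varphi(X):=\sum_iT_iXT_i^*$ and $\varphi^*(X):=\sum_iT_i^*XT_i$, one has $\|\varphi^*(I)\|=m$ and $\operatorname{curv}_*(\varphi,I)=t$.
   Context: A tuple $T_1,\dots,T_n$ defines a Hilbert module over the free semigroup algebra; "finite rank contractive" means $\sum_iT_iT_i^*\le I$ and $\dim\overline{(I-\sum_iT_iT_i^* )\mathcal H}<\infty$. For positive $D$ with $\varphi(D)\le D$, $\operatorname{curv}_*(\varphi,D):=\lim_{k\to\infty}\frac{\operatorname{trace}[K_{\varphi,D}^*(P_{\le k}\otimes I)K_{\varphi,D}]}{1+\|\varphi^*(I)\|+\cdots+\|\varphi^*(I)\|^k}$, where $K_{\varphi,D}h:=\sum_{\alpha\in\mathbb F_n^+}e_\alpha\otimes(D-\varphi(D))^{1/2}T_\alpha^*h$ maps $\mathcal H$ into $F^2(H_n)\otimes\mathcal H$ ($F^2(H_n)$ the full Fock space with orthonormal basis $\{e_\alpha\}$ indexed by words in the free semigroup $\mathbb F_n^+$), and $P_{\le k}$ is the projection onto $\operatorname{span}\{e_\alpha:|\alpha|\le k\}$. *)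

theory Defs
  imports "HOL-Analysis.Analysis"
begin

text \<open>Concrete model of a (separable, complex) Hilbert space: \<open>\<ell>\<^sup>2(A)\<close> for an index
set \<open>A \<subseteq> \<nat>\<close>, realised as complex sequences supported in A that are square summable.\<close>

type_synonym vec = "nat \<Rightarrow> complex"
type_synonym op = "vec \<Rightarrow> vec"

definition l2 :: "nat set \<Rightarrow> vec set" where
  "l2 A = {x. (\<forall>j. j \<notin> A \<longrightarrow> x j = 0) \<and> summable (\<lambda>j. (cmod (x j))\<^sup>2)}"

definition inner_l2 :: "vec \<Rightarrow> vec \<Rightarrow> complex" where
  "inner_l2 x y = (\<Sum>j. x j * cnj (y j))"

definition norm_l2 :: "vec \<Rightarrow> real" where
  "norm_l2 x = sqrt (\<Sum>j. (cmod (x j))\<^sup>2)"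

definition evec :: "nat \<Rightarrow> vec" where
  "evec j = (\<lambda>i. if i = j then 1 else 0)"

definition bounded_op :: "nat set \<Rightarrow> op \<Rightarrow> bool" where
  "bounded_op A T \<longleftrightarrow>
     (\<forall>x\<in>l2 A. T x \<in> l2 A) \<and>
     (\<forall>x\<in>l2 A. \<forall>y\<in>l2 A. \<forall>c::complex. T (\<lambda>j. x j + c * y j) = (\<lambda>j. T x j + c * T y j)) \<and>
     (\<exists>C. \<forall>x\<in>l2 A. norm_l2 (T x) \<le> C * norm_l2 x)"

definition is_adjoint :: "nat set \<Rightarrow> op \<Rightarrow> op \<Rightarrow> bool" where
  "is_adjoint A T S \<longleftrightarrow> (\<forall>x\<in>l2 A. \<forall>y\<in>l2 A. inner_l2 (T x) y = inner_l2 x (S y))"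

definition opnorm :: "nat set \<Rightarrow> op \<Rightarrow> real" where
  "opnorm A S = Sup {norm_l2 (S x) | x. x \<in> l2 A \<and> norm_l2 x \<le> 1}"

definition finite_rank :: "nat set \<Rightarrow> op \<Rightarrow> bool" where
  "finite_rank A S \<longleftrightarrow> (\<exists>F. finite F \<and> F \<subseteq> l2 A \<and>
      (\<forall>x\<in>l2 A. \<exists>c::vec \<Rightarrow> complex. S x = (\<lambda>j. \<Sum>f\<in>F. c f * f j)))"

text \<open>The maps \<open>\<phi>(X) = \<Sum> T_i X T_i^*\<close> at X = I, i.e. \<open>\<Sum> T_i T_i^*\<close>, and
 \<open>\<phi>^*(X) = \<Sum> T_i^* X T_i\<close> at X = I, i.e. \<open>\<Sum> T_i^* T_i\<close> (indices i < n).\<close>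
definition phiI :: "nat \<Rightarrow> (nat \<Rightarrow> op) \<Rightarrow> (nat \<Rightarrow> op) \<Rightarrow> op" where
  "phiI n T Ts x = (\<lambda>j. \<Sum>i<n. T i (Ts i x) j)"

definition phistarI :: "nat \<Rightarrow> (nat \<Rightarrow> op) \<Rightarrow> (nat \<Rightarrow> op) \<Rightarrow> op" where
  "phistarI n T Ts x = (\<lambda>j. \<Sum>i<n. Ts i (T i x) j)"

definition defect :: "nat \<Rightarrow> (nat \<Rightarrow> op) \<Rightarrow> (nat \<Rightarrow> op) \<Rightarrow> op" where
  "defect n T Ts x = (\<lambda>j. x j - phiI n T Ts x j)"

fun word_star :: "(nat \<Rightarrow> op) \<Rightarrow> nat list \<Rightarrow> op" where
  "word_star Ts [] = id"
| "word_star Ts (i # \<alpha>) = word_star Ts \<alpha> \<circ> Ts i"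

definition words_le :: "nat \<Rightarrow> nat \<Rightarrow> nat list set" where
  "words_le n k = {\<alpha>. set \<alpha> \<subseteq> {..<n} \<and> length \<alpha> \<le> k}"

text \<open>Summand of \<open>trace[K^*(P_{\<le>k}\<otimes>I)K]\<close> (case D = I) at basis vector \<open>e_j\<close>:
  \<open>\<Sum>_{|\<alpha>|\<le>k} \<parallel>\<Delta>^{1/2} T_\<alpha>^* e_j\<parallel>\<^sup>2 = \<Sum>_{|\<alpha>|\<le>k} \<langle>\<Delta> T_\<alpha>^* e_j, T_\<alpha>^* e_j\<rangle>\<close>.\<close>
definition curv_term :: "nat \<Rightarrow> (nat \<Rightarrow> op) \<Rightarrow> (nat \<Rightarrow> op) \<Rightarrow> nat \<Rightarrow> nat \<Rightarrow> real" where
  "curv_term n T Ts k j =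
     (\<Sum>\<alpha>\<in>words_le n k. Re (inner_l2 (defect n T Ts (word_star Ts \<alpha> (evec j))) (word_star Ts \<alpha> (evec j))))"

end

theory Submission
  imports Defs
begin


lemma reindexR:
  fixes f :: "nat \<Rightarrow> 'a::{comm_monoid_add, topological_space}"
  assumes cons: "\<And>j k. \<rho> k = Some j \<longleftrightarrow> \<sigma> j = Some k"
    and z: "\<And>k. \<rho> k = None \<Longrightarrow> f k = 0"
  shows "(f has_sum s) UNIV \<longleftrightarrow> ((\<lambda>j. case \<sigma> j of None \<Rightarrow> 0 | Some k \<Rightarrow> f k) has_sum s) UNIV"
proof -
  have "(f has_sum s) UNIV \<longleftrightarrow> (f has_sum s) {k. \<rho> k \<noteq> None}"
    by (rule has_sum_cong_neutral) (use z in auto)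
  also have "\<dots> \<longleftrightarrow> ((\<lambda>j. f (the (\<sigma> j))) has_sum s) {j. \<sigma> j \<noteq> None}"
  proof (rule has_sum_reindex_bij_betw[symmetric])
    show "bij_betw (\<lambda>j. the (\<sigma> j)) {j. \<sigma> j \<noteq> None} {k. \<rho> k \<noteq> None}"
    proof (rule bij_betwI')
      fix x y assume "x \<in> {j. \<sigma> j \<noteq> None}" "y \<in> {j. \<sigma> j \<noteq> None}"
      show "(the (\<sigma> x) = the (\<sigma> y)) = (x = y)"
      proof (rule iffI)
        assume h: "the (\<sigma> x) = the (\<sigma> y)"
        obtain a where a: "\<sigma> x = Some a" using \<open>x \<in> _\<close> by auto
        obtain b where b: "\<sigma> y = Some b" using \<open>y \<in> _\<close> by auto
        have "\<rho> a = Some x" "\<rho> b = Some y" using a b cons by auto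
        then show "x = y" using h a b by simp
      qed simp
    next
      fix x assume "x \<in> {j. \<sigma> j \<noteq> None}" then show "the (\<sigma> x) \<in> {k. \<rho> k \<noteq> None}"
        using cons by auto
    next
      fix y assume "y \<in> {k. \<rho> k \<noteq> None}" then show "\<exists>x\<in>{j. \<sigma> j \<noteq> None}. y = the (\<sigma> x)"
      proof -
        obtain a where a: "\<rho> y = Some a" using \<open>y \<in> _\<close> by auto
        then have "\<sigma> a = Some y" using cons by auto
        then show ?thesis by (intro bexI[of _ a]) auto
      qed
    qed
  qed
  also have "\<dots> \<longleftrightarrow> ((\<lambda>j. case \<sigma> j of None \<Rightarrow> 0 | Some k \<Rightarrow> f k) has_sum s) UNIV"
    by (rule has_sum_cong_neutral) (auto split: option.splits)
  finally show ?thesis .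
qed

definition Gop :: "(nat \<Rightarrow> nat option) \<Rightarrow> (nat \<Rightarrow> nat \<Rightarrow> real) \<Rightarrow> op" where
  "Gop \<rho> W x = (\<lambda>k. case \<rho> k of None \<Rightarrow> 0 | Some j \<Rightarrow> complex_of_real (W k j) * x j)"

lemma l2_UNIV: "l2 UNIV = {x. summable (\<lambda>j. (cmod (x j))\<^sup>2)}"
  by (simp add: l2_def)

lemma Gop_l2:
  assumes cons: "\<And>j k. \<rho> k = Some j \<longleftrightarrow> \<sigma> j = Some k"
    and W: "\<And>k j. \<bar>W k j\<bar> \<le> 1"
    and x: "summable (\<lambda>j. (cmod (x j))\<^sup>2)"
  shows "summable (\<lambda>k. (cmod (Gop \<rho> W x k))\<^sup>2) \<and>
         (\<Sum>k. (cmod (Gop \<rho> W x k))\<^sup>2) \<le> (\<Sum>j. (cmod (x j))\<^sup>2)"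
proof -
  define f where "f k = (cmod (Gop \<rho> W x k))\<^sup>2" for k
  define g where "g j = (case \<sigma> j of None \<Rightarrow> 0 | Some k \<Rightarrow> f k)" for j
  have gx: "g j = (case \<sigma> j of None \<Rightarrow> 0 | Some k \<Rightarrow> (W k j)\<^sup>2 * (cmod (x j))\<^sup>2)" for j
  proof (cases "\<sigma> j")
    case (Some k)
    then have "\<rho> k = Some j" using cons by auto
    then show ?thesis using Some by (simp add: g_def f_def Gop_def norm_mult power_mult_distrib)
  qed (simp add: g_def)
  have g0: "0 \<le> g j" for j by (simp add: gx split: option.split)
  have gle: "g j \<le> (cmod (x j))\<^sup>2" for j
  proof (cases "\<sigma> j")
    case (Some k)
    have "\<bar>W k j\<bar>\<^sup>2 \<le> 1" using W[of k j] by (intro power_le_one) auto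
    then have "(W k j)\<^sup>2 \<le> 1" by simp
    then have "(W k j)\<^sup>2 * (cmod (x j))\<^sup>2 \<le> 1 * (cmod (x j))\<^sup>2"
      by (intro mult_right_mono) auto
    then show ?thesis using Some by (simp add: gx)
  qed (simp add: gx)
  have sg: "summable g"
    by (rule summable_comparison_test'[OF x]) (use g0 gle in auto)
  have "(g has_sum suminf g) UNIV"
    by (rule sums_nonneg_imp_has_sum) (use sg g0 in \<open>auto simp: summable_sums\<close>)
  then have "(f has_sum suminf g) UNIV"
    unfolding g_def by (subst reindexR[OF cons]) (auto simp: f_def Gop_def)
  then have fs: "f sums suminf g" by (rule has_sum_imp_sums)
  have "suminf g \<le> (\<Sum>j. (cmod (x j))\<^sup>2)"
    by (rule suminf_le[OF gle sg x])
  then show ?thesis using fs unfolding f_def by (auto simp: sums_iff)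
qed

lemma Gop_bounded:
  assumes cons: "\<And>j k. \<rho> k = Some j \<longleftrightarrow> \<sigma> j = Some k"
    and W: "\<And>k j. \<bar>W k j\<bar> \<le> 1"
  shows "bounded_op UNIV (Gop \<rho> W)"
  unfolding bounded_op_def
proof (intro conjI ballI allI)
  fix x assume "x \<in> l2 UNIV"
  then show "Gop \<rho> W x \<in> l2 UNIV" using Gop_l2[OF cons W] by (auto simp: l2_UNIV)
next
  fix x y c
  show "Gop \<rho> W (\<lambda>j. x j + c * y j) = (\<lambda>j. Gop \<rho> W x j + c * Gop \<rho> W y j)"
    by (rule ext) (simp add: Gop_def algebra_simps split: option.split)
next
  show "\<exists>C. \<forall>x\<in>l2 UNIV. norm_l2 (Gop \<rho> W x) \<le> C * norm_l2 x"
  proof (intro exI[of _ 1] ballI)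
    fix x assume "x \<in> l2 UNIV"
    then show "norm_l2 (Gop \<rho> W x) \<le> 1 * norm_l2 x"
      using Gop_l2[OF cons W, of x] by (auto simp: l2_UNIV norm_l2_def)
  qed
qed

lemma prod_le_sq: "0 \<le> (a::real) \<Longrightarrow> 0 \<le> b \<Longrightarrow> a * b \<le> a\<^sup>2 + b\<^sup>2"
proof -
  assume "0 \<le> a" "0 \<le> b"
  have "0 \<le> (a - b)\<^sup>2" by simp
  then have "2 * (a * b) \<le> a\<^sup>2 + b\<^sup>2" by (simp add: power2_diff)
  moreover have "0 \<le> a * b" using \<open>0 \<le> a\<close> \<open>0 \<le> b\<close> by simp
  ultimately show ?thesis by linarith
qed

lemma Gop_adjoint:
  assumes cons: "\<And>j k. \<rho> k = Some j \<longleftrightarrow> \<sigma> j = Some k"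
    and W: "\<And>j. \<bar>w j\<bar> \<le> 1"
  shows "is_adjoint UNIV (Gop \<rho> (\<lambda>k j. w j)) (Gop \<sigma> (\<lambda>j k. w j))"
  unfolding is_adjoint_def
proof (intro ballI)
  fix x y assume "x \<in> l2 UNIV" "y \<in> l2 UNIV"
  then have x: "summable (\<lambda>j. (cmod (x j))\<^sup>2)" and y: "summable (\<lambda>j. (cmod (y j))\<^sup>2)"
    by (auto simp: l2_UNIV)
  define F where "F k = Gop \<rho> (\<lambda>k j. w j) x k * cnj (y k)" for k
  define G where "G j = (case \<sigma> j of None \<Rightarrow> 0 | Some k \<Rightarrow> F k)" for j
  have sx: "summable (\<lambda>k. (cmod (Gop \<rho> (\<lambda>k j. w j) x k))\<^sup>2)"
    using Gop_l2[OF cons _ x, of "\<lambda>k j. w j"] W by auto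
  have "summable (\<lambda>k. norm (F k))"
  proof (rule summable_comparison_test'[OF summable_add[OF sx y]])
    fix k show "norm (norm (F k)) \<le> (cmod (Gop \<rho> (\<lambda>k j. w j) x k))\<^sup>2 + (cmod (y k))\<^sup>2"
      by (simp add: F_def norm_mult prod_le_sq)
  qed
  then have "(F has_sum suminf F) UNIV"
    using norm_summable_imp_has_sum summable_sums summable_norm_cancel by blast
  then have "(G has_sum suminf F) UNIV"
    unfolding G_def by (subst reindexR[OF cons, symmetric]) (auto simp: F_def Gop_def)
  then have "G sums suminf F" by (rule has_sum_imp_sums)
  moreover have "G = (\<lambda>j. x j * cnj (Gop \<sigma> (\<lambda>j k. w j) y j))"
  proof (rule ext)
    fix j show "G j = x j * cnj (Gop \<sigma> (\<lambda>j k. w j) y j)"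
    proof (cases "\<sigma> j")
      case (Some k)
      then have "\<rho> k = Some j" using cons by auto
      then show ?thesis using Some by (simp add: G_def F_def Gop_def)
    qed (simp add: G_def Gop_def)
  qed
  moreover have "inner_l2 (Gop \<rho> (\<lambda>k j. w j) x) y = suminf F"
    unfolding inner_l2_def F_def by simp
  ultimately show "inner_l2 (Gop \<rho> (\<lambda>k j. w j) x) y = inner_l2 x (Gop \<sigma> (\<lambda>j k. w j) y)"
    by (simp add: inner_l2_def sums_iff)
qed

lemma Gop_comp1:
  assumes cons: "\<And>j k. \<rho> k = Some j \<longleftrightarrow> \<sigma> j = Some k"
  shows "Gop \<rho> (\<lambda>k j. w j) (Gop \<sigma> (\<lambda>j k. w j) x) =
     (\<lambda>k. complex_of_real (case \<rho> k of None \<Rightarrow> 0 | Some j \<Rightarrow> (w j)\<^sup>2) * x k)"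
proof (rule ext)
  fix k show "Gop \<rho> (\<lambda>k j. w j) (Gop \<sigma> (\<lambda>j k. w j) x) k =
     complex_of_real (case \<rho> k of None \<Rightarrow> 0 | Some j \<Rightarrow> (w j)\<^sup>2) * x k"
  proof (cases "\<rho> k")
    case (Some j)
    then have "\<sigma> j = Some k" using cons by auto
    then show ?thesis using Some by (simp add: Gop_def power2_eq_square)
  qed (simp add: Gop_def)
qed

lemma Gop_comp2:
  assumes cons: "\<And>j k. \<rho> k = Some j \<longleftrightarrow> \<sigma> j = Some k"
  shows "Gop \<sigma> (\<lambda>j k. w j) (Gop \<rho> (\<lambda>k j. w j) x) =
     (\<lambda>j. complex_of_real (case \<sigma> j of None \<Rightarrow> 0 | Some k \<Rightarrow> (w j)\<^sup>2) * x j)"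
proof (rule ext)
  fix j show "Gop \<sigma> (\<lambda>j k. w j) (Gop \<rho> (\<lambda>k j. w j) x) j =
     complex_of_real (case \<sigma> j of None \<Rightarrow> 0 | Some k \<Rightarrow> (w j)\<^sup>2) * x j"
  proof (cases "\<sigma> j")
    case (Some k)
    then have "\<rho> k = Some j" using cons by auto
    then show ?thesis using Some by (simp add: Gop_def power2_eq_square)
  qed (simp add: Gop_def)
qed

lemma Gop_evec:
  assumes cons: "\<And>j k. \<rho> k = Some j \<longleftrightarrow> \<sigma> j = Some k"
  shows "Gop \<sigma> (\<lambda>j k. w j) (evec k) =
     (case \<rho> k of None \<Rightarrow> (\<lambda>_. 0) | Some j \<Rightarrow> (\<lambda>i. complex_of_real (w j) * evec j i))"
proof (rule ext)
  fix i show "Gop \<sigma> (\<lambda>j k. w j) (evec k) i =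
     (case \<rho> k of None \<Rightarrow> (\<lambda>_. 0) | Some j \<Rightarrow> (\<lambda>i. complex_of_real (w j) * evec j i)) i"
  proof (cases "\<rho> k")
    case None
    have "\<sigma> i \<noteq> Some k"
    proof
      assume "\<sigma> i = Some k"
      then have "\<rho> k = Some i" using cons by blast
      with None show False by simp
    qed
    then show ?thesis using None by (auto simp: Gop_def evec_def split: option.split)
  next
    case (Some j)
    have "\<sigma> i = Some k \<longleftrightarrow> \<rho> k = Some i" using cons by blast
    then have "\<sigma> i = Some k \<longleftrightarrow> i = j" using Some by auto
    then show ?thesis using Some by (auto simp: Gop_def evec_def split: option.split)
  qed
qed

lemma Gop_zero: "Gop \<rho> W (\<lambda>_. 0) = (\<lambda>_. 0)"
  by (rule ext) (simp add: Gop_def split: option.split)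

lemma Gop_scale: "Gop \<rho> W (\<lambda>i. c * v i) = (\<lambda>i. c * Gop \<rho> W v i)"
  by (rule ext) (simp add: Gop_def algebra_simps split: option.split)



definition rhoS :: "nat \<Rightarrow> nat \<Rightarrow> nat \<Rightarrow> nat option" where
  "rhoS m i k = (if even k \<and> 0 < k \<and> (k div 2 - 1) mod m = i then Some (2 * ((k div 2 - 1) div m)) else None)"
definition sigS :: "nat \<Rightarrow> nat \<Rightarrow> nat \<Rightarrow> nat option" where
  "sigS m i j = (if even j then Some (2 * (m * (j div 2) + i + 1)) else None)"
definition rhoC :: "nat \<Rightarrow> nat option" where
  "rhoC k = (if k = 0 then Some 1 else if odd k then Some (k + 2) else None)"
definition sigC :: "nat \<Rightarrow> nat option" where
  "sigC j = (if j = 1 then Some 0 else if odd j \<and> 3 \<le> j then Some (j - 2) else None)"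
definition rh :: "nat \<Rightarrow> nat \<Rightarrow> nat \<Rightarrow> nat option" where
  "rh m i = (if i < m then rhoS m i else if i = m then rhoC else (\<lambda>_. None))"
definition sg :: "nat \<Rightarrow> nat \<Rightarrow> nat \<Rightarrow> nat option" where
  "sg m i = (if i < m then sigS m i else if i = m then sigC else (\<lambda>_. None))"
definition wt :: "real \<Rightarrow> nat \<Rightarrow> nat \<Rightarrow> nat \<Rightarrow> real" where
  "wt c m i j = (if i = m \<and> j = 1 then c else 1)"

lemma consS:
  assumes "0 < m" "i < m"
  shows "rhoS m i k = Some j \<longleftrightarrow> sigS m i j = Some k"
proof
  assume h: "rhoS m i k = Some j"
  then have k: "even k" "0 < k" "(k div 2 - 1) mod m = i" and j: "j = 2 * ((k div 2 - 1) div m)"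
    by (auto simp: rhoS_def split: if_splits)
  have "m * ((k div 2 - 1) div m) + (k div 2 - 1) mod m = k div 2 - 1"
    by (rule mult_div_mod_eq)
  moreover have "j div 2 = (k div 2 - 1) div m" using j by simp
  moreover have "k = 2 * (k div 2 - 1 + 1)" using k by auto
  ultimately have "2 * (m * (j div 2) + i + 1) = k" using k(3) by metis
  then show "sigS m i j = Some k" using j by (simp add: sigS_def)
next
  assume h: "sigS m i j = Some k"
  then have j: "even j" and k: "k = 2 * (m * (j div 2) + i + 1)"
    by (auto simp: sigS_def split: if_splits)
  have q: "k div 2 - 1 = m * (j div 2) + i" using k by simp
  have "(m * (j div 2) + i) mod m = i" using assms by simp
  moreover have "(m * (j div 2) + i) div m = j div 2" using assms by simp
  ultimately show "rhoS m i k = Some j"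
    using q k j by (simp add: rhoS_def)
qed

lemma consC: "rhoC k = Some j \<longleftrightarrow> sigC j = Some k"
  by (auto simp: rhoC_def sigC_def)

lemma cons_rh:
  assumes "0 < m"
  shows "rh m i k = Some j \<longleftrightarrow> sg m i j = Some k"
  using consS[OF assms] consC by (auto simp: rh_def sg_def)

lemma wt_bound: "0 \<le> c \<Longrightarrow> c \<le> 1 \<Longrightarrow> \<bar>wt c m i j\<bar> \<le> 1"
  by (simp add: wt_def)

definition TT where "TT c m i = Gop (rh m i) (\<lambda>k j. wt c m i j)"
definition TS where "TS c m i = Gop (sg m i) (\<lambda>j k. wt c m i j)"

lemma dterm:
  assumes "0 < m"
  shows "(case rh m i k of None \<Rightarrow> 0 | Some j \<Rightarrow> (wt c m i j)\<^sup>2) =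
    (if i = (if k = 0 \<or> odd k then m else (k div 2 - 1) mod m) then (if k = 0 then c\<^sup>2 else 1) else 0)"
  using assms by (auto simp: rh_def rhoS_def rhoC_def wt_def)

lemma Dsum:
  assumes "0 < m" "m < n"
  shows "(\<Sum>i<n. case rh m i k of None \<Rightarrow> 0 | Some j \<Rightarrow> (wt c m i j)\<^sup>2) = (if k = 0 then c\<^sup>2 else 1)"
proof -
  have lt: "(if k = 0 \<or> odd k then m else (k div 2 - 1) mod m) < n"
  proof -
    have "\<forall>q. q mod m < n" using assms by (meson less_trans mod_less_divisor)
    then show ?thesis using assms by auto
  qed
  show ?thesis
    unfolding dterm[OF assms(1)] using lt sum.delta[of "{..<n}" "if k = 0 \<or> odd k then m else (k div 2 - 1) mod m" "\<lambda>_. if k = 0 then c\<^sup>2 else 1"]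
    by simp
qed

lemma eterm:
  assumes "0 < m"
  shows "(case sg m i j of None \<Rightarrow> 0 | Some k \<Rightarrow> (wt c m i j)\<^sup>2) =
    (if even j then (if i < m then 1 else 0) else if i = m then (if j = 1 then c\<^sup>2 else 1) else 0)"
  using assms by (auto simp: sg_def sigS_def sigC_def wt_def; presburger)

lemma Esum:
  assumes "0 < m" "m < n"
  shows "(\<Sum>i<n. case sg m i j of None \<Rightarrow> 0 | Some k \<Rightarrow> (wt c m i j)\<^sup>2) =
     (if even j then real m else if j = 1 then c\<^sup>2 else 1)"
proof (cases "even j")
  case True
  have "(\<Sum>i<n. (if i < m then 1 else 0 :: real)) = (\<Sum>i\<in>{..<m}. 1)"
    by (rule sum.mono_neutral_cong_right) (use assms in auto)
  then show ?thesis unfolding eterm[OF assms(1)] using True by simp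
next
  case False
  then show ?thesis unfolding eterm[OF assms(1)] using assms by simp
qed

lemma phiI_eq:
  assumes "0 < m" "m < n"
  shows "phiI n (TT c m) (TS c m) x = (\<lambda>k. complex_of_real (if k = 0 then c\<^sup>2 else 1) * x k)"
proof (rule ext)
  fix k
  have "phiI n (TT c m) (TS c m) x k =
     (\<Sum>i<n. complex_of_real (case rh m i k of None \<Rightarrow> 0 | Some j \<Rightarrow> (wt c m i j)\<^sup>2) * x k)"
    unfolding phiI_def TT_def TS_def Gop_comp1[OF cons_rh[OF assms(1)]] by simp
  also have "\<dots> = complex_of_real (\<Sum>i<n. case rh m i k of None \<Rightarrow> 0 | Some j \<Rightarrow> (wt c m i j)\<^sup>2) * x k"
    by (simp add: sum_distrib_right)
  finally show "phiI n (TT c m) (TS c m) x k = complex_of_real (if k = 0 then c\<^sup>2 else 1) * x k"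
    using Dsum[OF assms] by simp
qed

lemma phistarI_eq:
  assumes "0 < m" "m < n"
  shows "phistarI n (TT c m) (TS c m) x =
    (\<lambda>j. complex_of_real (if even j then real m else if j = 1 then c\<^sup>2 else 1) * x j)"
proof (rule ext)
  fix j
  have "phistarI n (TT c m) (TS c m) x j =
     (\<Sum>i<n. complex_of_real (case sg m i j of None \<Rightarrow> 0 | Some k \<Rightarrow> (wt c m i j)\<^sup>2) * x j)"
    unfolding phistarI_def TT_def TS_def Gop_comp2[OF cons_rh[OF assms(1)]] by simp
  also have "\<dots> = complex_of_real (\<Sum>i<n. case sg m i j of None \<Rightarrow> 0 | Some k \<Rightarrow> (wt c m i j)\<^sup>2) * x j"
    by (simp add: sum_distrib_right)
  finally show "phistarI n (TT c m) (TS c m) x j =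
     complex_of_real (if even j then real m else if j = 1 then c\<^sup>2 else 1) * x j"
    using Esum[OF assms] by simp
qed



lemma diag_le:
  assumes "\<And>k. 0 \<le> D k" "\<And>k. D k \<le> 1" "x \<in> l2 UNIV"
  shows "Re (inner_l2 (\<lambda>k. complex_of_real (D k) * x k) x) \<le> Re (inner_l2 x x)"
proof -
  have sx: "summable (\<lambda>k. (cmod (x k))\<^sup>2)" using assms(3) by (simp add: l2_UNIV)
  have sd: "summable (\<lambda>k. D k * (cmod (x k))\<^sup>2)"
    by (rule summable_comparison_test'[OF sx]) (use assms(1,2) in \<open>auto intro: mult_left_le_one_le\<close>)
  have e1: "(\<lambda>k. complex_of_real (D k) * x k * cnj (x k)) = (\<lambda>k. complex_of_real (D k * (cmod (x k))\<^sup>2))"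
    by (rule ext) (simp only: of_real_mult complex_norm_square mult.assoc)
  have e2: "(\<lambda>k. x k * cnj (x k)) = (\<lambda>k. complex_of_real ((cmod (x k))\<^sup>2))"
    by (rule ext) (simp only: complex_norm_square)
  have "inner_l2 (\<lambda>k. complex_of_real (D k) * x k) x = complex_of_real (\<Sum>k. D k * (cmod (x k))\<^sup>2)"
    unfolding inner_l2_def e1 by (rule suminf_of_real[OF sd, symmetric])
  moreover have "inner_l2 x x = complex_of_real (\<Sum>k. (cmod (x k))\<^sup>2)"
    unfolding inner_l2_def e2 by (rule suminf_of_real[OF sx, symmetric])
  moreover have "(\<Sum>k. D k * (cmod (x k))\<^sup>2) \<le> (\<Sum>k. (cmod (x k))\<^sup>2)"
    by (rule suminf_le[OF _ sd sx]) (use assms(1,2) in \<open>auto intro: mult_left_le_one_le\<close>)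
  ultimately show ?thesis by simp
qed

lemma evec_sq: "(\<lambda>j. (cmod (complex_of_real M * evec a j))\<^sup>2) = (\<lambda>j. if j = a then M\<^sup>2 else 0)"
  by (rule ext) (simp add: evec_def)

lemma evec_sums: "(\<lambda>j. (cmod (complex_of_real M * evec a j))\<^sup>2) sums M\<^sup>2"
  unfolding evec_sq using sums_single[of a "\<lambda>_. M\<^sup>2"] by simp

lemma evec_l2: "evec a \<in> l2 UNIV" and evec_norm: "norm_l2 (evec a) = 1"
proof -
  have "(\<lambda>j. (cmod (evec a j))\<^sup>2) sums 1" using evec_sums[of 1 a] by simp
  then show "evec a \<in> l2 UNIV" "norm_l2 (evec a) = 1"
    by (auto simp: l2_UNIV norm_l2_def sums_iff)
qed

lemma diag_opnorm:
  assumes E0: "\<And>j. 0 \<le> E j" and EM: "\<And>j. E j \<le> M" and Ea: "E a = M"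
  shows "opnorm UNIV (\<lambda>x j. complex_of_real (E j) * x j) = M"
  unfolding opnorm_def
proof (rule cSup_eq_maximum)
  have M0: "0 \<le> M" using E0[of a] Ea by simp
  have "(\<lambda>j. complex_of_real (E j) * evec a j) = (\<lambda>j. complex_of_real M * evec a j)"
    by (rule ext) (simp add: evec_def Ea)
  then have "norm_l2 (\<lambda>j. complex_of_real (E j) * evec a j) = M"
    using evec_sums[of M a] M0 by (simp add: norm_l2_def sums_iff)
  then show "M \<in> {norm_l2 ((\<lambda>x j. complex_of_real (E j) * x j) x) |x. x \<in> l2 UNIV \<and> norm_l2 x \<le> 1}"
    using evec_l2[of a] evec_norm[of a] by force
next
  fix y assume "y \<in> {norm_l2 ((\<lambda>x j. complex_of_real (E j) * x j) x) |x. x \<in> l2 UNIV \<and> norm_l2 x \<le> 1}"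
  then obtain x where x: "x \<in> l2 UNIV" "norm_l2 x \<le> 1" and y: "y = norm_l2 (\<lambda>j. complex_of_real (E j) * x j)"
    by auto
  have M0: "0 \<le> M" using E0[of a] Ea by simp
  have sx: "summable (\<lambda>k. (cmod (x k))\<^sup>2)" using x by (simp add: l2_UNIV)
  have le: "(cmod (complex_of_real (E j) * x j))\<^sup>2 \<le> M\<^sup>2 * (cmod (x j))\<^sup>2" for j
  proof -
    have "(E j)\<^sup>2 \<le> M\<^sup>2" using E0[of j] EM[of j] by (intro power_mono) auto
    then have "(E j)\<^sup>2 * (cmod (x j))\<^sup>2 \<le> M\<^sup>2 * (cmod (x j))\<^sup>2" by (intro mult_right_mono) auto
    then show ?thesis using E0[of j] by (simp add: norm_mult power_mult_distrib)
  qed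
  have sM: "summable (\<lambda>j. M\<^sup>2 * (cmod (x j))\<^sup>2)" using sx by (rule summable_mult)
  have "(\<Sum>j. (cmod (complex_of_real (E j) * x j))\<^sup>2) \<le> (\<Sum>j. M\<^sup>2 * (cmod (x j))\<^sup>2)"
    by (rule suminf_le[OF le _ sM], rule summable_comparison_test'[OF sM]) (use le in auto)
  also have "\<dots> = M\<^sup>2 * (\<Sum>j. (cmod (x j))\<^sup>2)" using sx by (rule suminf_mult)
  finally have "y \<le> sqrt (M\<^sup>2 * (\<Sum>j. (cmod (x j))\<^sup>2))"
    unfolding y norm_l2_def by (rule real_sqrt_le_mono)
  also have "\<dots> = M * norm_l2 x" using M0 by (simp add: norm_l2_def real_sqrt_mult)
  also have "\<dots> \<le> M * 1" using x(2) M0 by (intro mult_left_mono) auto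
  finally show "y \<le> M" by simp
qed



lemma defect_eq:
  assumes "0 < m" "m < n" "c\<^sup>2 = 1 - t"
  shows "defect n (TT c m) (TS c m) x = (\<lambda>k. if k = 0 then complex_of_real t * x 0 else 0)"
  unfolding defect_def phiI_eq[OF assms(1,2)] assms(3)
  by (rule ext) (simp add: algebra_simps)

fun hh :: "nat \<Rightarrow> nat list \<Rightarrow> nat" where
  "hh m [] = 0"
| "hh m (i # \<alpha>) = m * hh m \<alpha> + i + 1"

lemma ws_zero: "word_star (TS c m) \<alpha> (\<lambda>_. 0) = (\<lambda>_. 0)"
  by (induction \<alpha>) (simp_all add: TS_def Gop_zero)

lemma ws_scale: "word_star (TS c m) \<alpha> (\<lambda>i. a * v i) = (\<lambda>i. a * word_star (TS c m) \<alpha> v i)"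
  by (induction \<alpha> arbitrary: v) (simp_all add: TS_def Gop_scale)

lemma ws_evec:
  assumes m: "0 < m"
  shows "word_star (TS c m) \<alpha> (evec j) 0 = (if set \<alpha> \<subseteq> {..<m} \<and> j = 2 * hh m \<alpha> then 1 else 0)"
proof (induction \<alpha> arbitrary: j)
  case Nil
  then show ?case by (auto simp: evec_def)
next
  case (Cons i \<alpha>)
  have ts: "TS c m i (evec j) = (case rh m i j of None \<Rightarrow> (\<lambda>_. 0)
      | Some j' \<Rightarrow> (\<lambda>x. complex_of_real (wt c m i j') * evec j' x))"
    unfolding TS_def by (rule Gop_evec[OF cons_rh[OF m]])
  show ?case
  proof (cases "rh m i j")
    case None
    have "\<not> (set (i # \<alpha>) \<subseteq> {..<m} \<and> j = 2 * hh m (i # \<alpha>))"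
    proof
      assume h: "set (i # \<alpha>) \<subseteq> {..<m} \<and> j = 2 * hh m (i # \<alpha>)"
      then have i: "i < m" by auto
      have "sigS m i (2 * hh m \<alpha>) = Some j" using h by (simp add: sigS_def)
      then have "rhoS m i j = Some (2 * hh m \<alpha>)" using consS[OF m i] by blast
      then show False using None i by (simp add: rh_def)
    qed
    then show ?thesis using None ts by (simp add: ws_zero del: hh.simps)
  next
    case (Some j')
    have "word_star (TS c m) (i # \<alpha>) (evec j) 0 = complex_of_real (wt c m i j') * word_star (TS c m) \<alpha> (evec j') 0"
      using Some ts by (simp add: ws_scale)
    also have "\<dots> = complex_of_real (wt c m i j') * (if set \<alpha> \<subseteq> {..<m} \<and> j' = 2 * hh m \<alpha> then 1 else 0)"
      using Cons.IH by simp
    also have "\<dots> = (if set (i # \<alpha>) \<subseteq> {..<m} \<and> j = 2 * hh m (i # \<alpha>) then 1 else 0)"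
    proof (cases "i < m")
      case True
      then have w: "wt c m i j' = 1" by (simp add: wt_def)
      have "rhoS m i j = Some j'" using Some True by (simp add: rh_def)
      then have "sigS m i j' = Some j" using consS[OF m True] by blast
      then have j': "even j'" and j: "j = 2 * (m * (j' div 2) + i + 1)"
        by (auto simp: sigS_def split: if_splits)
      have "(j' = 2 * hh m \<alpha>) \<longleftrightarrow> (j = 2 * (m * hh m \<alpha> + i + 1))"
      proof
        assume "j' = 2 * hh m \<alpha>" then show "j = 2 * (m * hh m \<alpha> + i + 1)" using j by simp
      next
        assume "j = 2 * (m * hh m \<alpha> + i + 1)"
        then have "m * (j' div 2) = m * hh m \<alpha>" using j by simp
        then have "j' div 2 = hh m \<alpha>" using m by simp
        then show "j' = 2 * hh m \<alpha>" using j' by (metis dvd_mult_div_cancel)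
      qed
      then show ?thesis using w True by auto
    next
      case False
      then have im: "i = m" using Some by (simp add: rh_def split: if_splits)
      then have "rhoC j = Some j'" using Some by (simp add: rh_def)
      then have "odd j'" by (auto simp: rhoC_def split: if_splits)
      then show ?thesis using im by auto
    qed
    finally show ?thesis .
  qed
qed

lemma inner_single: "inner_l2 (\<lambda>k. if k = 0 then a * v 0 else 0) v = a * v 0 * cnj (v 0)"
proof -
  have "(\<lambda>k. (if k = 0 then a * v 0 else 0) * cnj (v k)) = (\<lambda>k. if k = 0 then a * v 0 * cnj (v 0) else 0)"
    by auto
  then show ?thesis unfolding inner_l2_def
    using sums_single[of 0 "\<lambda>_. a * v 0 * cnj (v 0)"] by (simp add: sums_iff)
qed

lemma curv_eq:
  assumes "0 < m" "m < n" "c\<^sup>2 = 1 - t"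
  shows "curv_term n (TT c m) (TS c m) k j =
    (\<Sum>\<alpha>\<in>words_le n k. if set \<alpha> \<subseteq> {..<m} \<and> j = 2 * hh m \<alpha> then t else 0)"
proof -
  have r: "Re (inner_l2 (defect n (TT c m) (TS c m) v) v) = t * (cmod (v 0))\<^sup>2" for v
  proof -
    have "inner_l2 (defect n (TT c m) (TS c m) v) v = complex_of_real t * (v 0 * cnj (v 0))"
      unfolding defect_eq[OF assms] inner_single by (simp add: mult.assoc)
    also have "\<dots> = complex_of_real (t * (cmod (v 0))\<^sup>2)"
      by (simp only: of_real_mult complex_norm_square)
    finally show ?thesis by simp
  qed
  show ?thesis
    unfolding curv_term_def r ws_evec[OF assms(1)] by (rule sum.cong) auto
qed

lemma has_sum_finsum:
  fixes f :: "'i \<Rightarrow> 'a \<Rightarrow> real"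
  assumes "finite I" "\<And>a. a \<in> I \<Longrightarrow> (f a has_sum s a) A"
  shows "((\<lambda>x. \<Sum>a\<in>I. f a x) has_sum (\<Sum>a\<in>I. s a)) A"
  using assms
proof (induction I rule: finite_induct)
  case empty then show ?case by simp
next
  case (insert a I)
  then show ?case by (simp add: has_sum_add)
qed

lemma has_sum_point: "((\<lambda>j. if P \<and> j = (a::nat) then (t::real) else 0) has_sum (if P then t else 0)) UNIV"
proof (cases P)
  case True
  have "((\<lambda>j. if P \<and> j = a then t else 0) has_sum (if P then t else 0)) UNIV \<longleftrightarrow>
        ((\<lambda>j. if P \<and> j = a then t else 0) has_sum (if P then t else 0)) {a}"
    by (rule has_sum_cong_neutral) auto
  moreover have "((\<lambda>j. if P \<and> j = a then t else 0) has_sum (if P then t else 0)) {a}"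
    using has_sum_finite[of "{a}" "\<lambda>j. if P \<and> j = a then t else 0"] True by simp
  ultimately show ?thesis by simp
qed (simp add: has_sum_0)

lemma curv_has_sum:
  assumes "0 < m" "m < n" "c\<^sup>2 = 1 - t"
  shows "(curv_term n (TT c m) (TS c m) k has_sum (t * (\<Sum>i\<le>k. real m ^ i))) UNIV"
proof -
  have fin: "finite (words_le n k)"
    unfolding words_le_def by (rule finite_lists_length_le) simp
  have "((\<lambda>j. \<Sum>\<alpha>\<in>words_le n k. if set \<alpha> \<subseteq> {..<m} \<and> j = 2 * hh m \<alpha> then t else 0) has_sum
      (\<Sum>\<alpha>\<in>words_le n k. if set \<alpha> \<subseteq> {..<m} then t else 0)) UNIV"
    by (rule has_sum_finsum[OF fin has_sum_point])
  moreover have "(\<Sum>\<alpha>\<in>words_le n k. if set \<alpha> \<subseteq> {..<m} then t else 0) = t * (\<Sum>i\<le>k. real m ^ i)"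
  proof -
    have "(\<Sum>\<alpha>\<in>words_le n k. if set \<alpha> \<subseteq> {..<m} then t else 0) = (\<Sum>\<alpha>\<in>{\<alpha>\<in>words_le n k. set \<alpha> \<subseteq> {..<m}}. t)"
      by (rule sum.inter_filter[symmetric, OF fin])
    also have "{\<alpha>\<in>words_le n k. set \<alpha> \<subseteq> {..<m}} = {xs. set xs \<subseteq> {..<m} \<and> length xs \<le> k}"
      using assms(2) by (auto simp: words_le_def)
    also have "(\<Sum>\<alpha>\<in>{xs. set xs \<subseteq> {..<m} \<and> length xs \<le> k}. t) = t * real (\<Sum>i\<le>k. m ^ i)"
      using card_lists_length_le[of "{..<m}" k] by simp
    finally show ?thesis by simp
  qed
  moreover have "curv_term n (TT c m) (TS c m) k =
     (\<lambda>j. \<Sum>\<alpha>\<in>words_le n k. if set \<alpha> \<subseteq> {..<m} \<and> j = 2 * hh m \<alpha> then t else 0)"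
    by (rule ext) (rule curv_eq[OF assms])
  ultimately show ?thesis by simp
qed



theorem proposition6p7:
  fixes n m :: nat and t :: real
  assumes "n \<ge> 3" and "2 \<le> m" and "m \<le> n - 1" and "0 < t" and "t \<le> 1"
  shows "\<exists>(A::nat set) (T::nat \<Rightarrow> op) (Ts::nat \<Rightarrow> op).
     (\<forall>i<n. bounded_op A (T i) \<and> bounded_op A (Ts i) \<and> is_adjoint A (T i) (Ts i)) \<and>
     (\<forall>x\<in>l2 A. Re (inner_l2 (phiI n T Ts x) x) \<le> Re (inner_l2 x x)) \<and>
     finite_rank A (defect n T Ts) \<and>
     opnorm A (phistarI n T Ts) = real m \<and>
     (\<forall>k. curv_term n T Ts k summable_on A) \<and>
     (\<lambda>k. (\<Sum>\<^sub>\<infinity>j\<in>A. curv_term n T Ts k j) /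
          (\<Sum>i\<le>k. (opnorm A (phistarI n T Ts)) ^ i)) \<longlonglongrightarrow> t"
proof -
  have m0: "0 < m" and mn: "m < n" using assms by auto
  define c where "c = sqrt (1 - t)"
  have c2: "c\<^sup>2 = 1 - t" using assms(5) by (simp add: c_def)
  have c0: "0 \<le> c" and c1: "c \<le> 1" using assms(4,5) by (auto simp: c_def)
  have cc1: "c\<^sup>2 \<le> 1" using c2 assms(4) by simp
  have P1: "\<forall>i<n. bounded_op UNIV (TT c m i) \<and> bounded_op UNIV (TS c m i) \<and> is_adjoint UNIV (TT c m i) (TS c m i)"
  proof (intro allI impI conjI)
    fix i
    have cons: "\<And>j k. rh m i k = Some j \<longleftrightarrow> sg m i j = Some k" by (rule cons_rh[OF m0])
    have cons': "\<And>j k. sg m i k = Some j \<longleftrightarrow> rh m i j = Some k" using cons by blast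
    show "bounded_op UNIV (TT c m i)" unfolding TT_def
      by (rule Gop_bounded[OF cons]) (rule wt_bound[OF c0 c1])
    show "bounded_op UNIV (TS c m i)" unfolding TS_def
      by (rule Gop_bounded[OF cons']) (rule wt_bound[OF c0 c1])
    show "is_adjoint UNIV (TT c m i) (TS c m i)" unfolding TT_def TS_def
      by (rule Gop_adjoint[OF cons]) (rule wt_bound[OF c0 c1])
  qed
  have P2: "\<forall>x\<in>l2 UNIV. Re (inner_l2 (phiI n (TT c m) (TS c m) x) x) \<le> Re (inner_l2 x x)"
  proof
    fix x :: vec assume "x \<in> l2 UNIV"
    then show "Re (inner_l2 (phiI n (TT c m) (TS c m) x) x) \<le> Re (inner_l2 x x)"
      unfolding phiI_eq[OF m0 mn] by (rule diag_le[rotated 2]) (use cc1 in auto)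
  qed
  have P3: "finite_rank UNIV (defect n (TT c m) (TS c m))"
    unfolding finite_rank_def
  proof (intro exI[of _ "{evec 0}"] conjI ballI)
    fix x :: vec
    show "\<exists>cf::vec \<Rightarrow> complex. defect n (TT c m) (TS c m) x = (\<lambda>j. \<Sum>f\<in>{evec 0}. cf f * f j)"
      by (intro exI[of _ "\<lambda>_. complex_of_real t * x 0"])
         (auto simp: defect_eq[OF m0 mn c2] evec_def)
  qed (use evec_l2 in auto)
  have P4: "opnorm UNIV (phistarI n (TT c m) (TS c m)) = real m"
  proof -
    have "phistarI n (TT c m) (TS c m) =
      (\<lambda>x j. complex_of_real (if even j then real m else if j = 1 then c\<^sup>2 else 1) * x j)"
      by (rule ext) (rule phistarI_eq[OF m0 mn])
    moreover have "opnorm UNIV (\<lambda>x j. complex_of_real (if even j then real m else if j = 1 then c\<^sup>2 else 1) * x j) = real m"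
      by (rule diag_opnorm[where a = 0]) (use cc1 m0 in auto)
    ultimately show ?thesis by simp
  qed
  have P5: "\<forall>k. curv_term n (TT c m) (TS c m) k summable_on UNIV"
    using curv_has_sum[OF m0 mn c2] has_sum_imp_summable by blast
  have P6: "(\<lambda>k. (\<Sum>\<^sub>\<infinity>j\<in>UNIV. curv_term n (TT c m) (TS c m) k j) /
          (\<Sum>i\<le>k. (opnorm UNIV (phistarI n (TT c m) (TS c m))) ^ i)) \<longlonglongrightarrow> t"
  proof -
    have "(\<Sum>\<^sub>\<infinity>j\<in>UNIV. curv_term n (TT c m) (TS c m) k j) /
          (\<Sum>i\<le>k. (opnorm UNIV (phistarI n (TT c m) (TS c m))) ^ i) = t" for k
    proof -
      have pos: "0 < (\<Sum>i\<le>k. real m ^ i)"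
        by (rule sum_pos2[of _ 0]) auto
      have "(\<Sum>\<^sub>\<infinity>j\<in>UNIV. curv_term n (TT c m) (TS c m) k j) = t * (\<Sum>i\<le>k. real m ^ i)"
        using curv_has_sum[OF m0 mn c2] by (rule infsumI)
      then show ?thesis using pos P4 by simp
    qed
    then show ?thesis by simp
  qed
  show ?thesis
    by (intro exI[of _ UNIV] exI[of _ "TT c m"] exI[of _ "TS c m"] conjI P1 P2 P3 P4 P5 P6)
qed


end
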